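(* Suppose $m=0$ (purely deterministic problem). Then for every integer $k\ge1$ and $\tau\in T$: if $\mathfrak{h}(\tau)=k$ then $\rho(\tau)\ge k$; if $\mathfrak{r}(\tau)=k$ then $\rho(\tau)\ge2k-1$; if $\mathfrak{d}(\tau)=k$ then $\rho(\tau)\ge2^k-1$. The same holds for $u\in U_f$ with $\mathfrak{h}',\mathfrak{r}',\mathfrak{d}'$ in place of $\mathfrak{h},\mathfrak{r},\mathfrak{d}$.
   Context: With $m=0$, $T$ is the set of rooted trees (all vertices of the single color $0$): the empty tree $\emptyset$ and all $\tau=[\tau_1,\dots,\tau_\kappa]_0$, $\kappa\ge0$, $\tau_j\in T\setminus\{\emptyset\}$ unordered (new root joined to the roots of the $\tau_j$; $\bullet_0$ if $\kappa=0$). Order: $\rho(\emptyset)=0$, $\rho([\tau_1,\dots,\tau_\kappa]_0)=1+\sum_j\rho(\tau_j)$ (the number of vertices). $U_f$: trees $u=[\tau_1,\dots,\tau_\kappa]_f$, $\kappa\ge0$, $\tau_j\in T\setminus\{\emptyset\}$, $\rho(u)=\sum_j\rho(\tau_j)$, $\mathfrak{g}'(u)=\max_j\mathfrak{g}(\tau_j)$. Maxima over empty sets are $0$. $\mathfrak{h}(\emptyset)=0$, $\mathfrak{h}(\bullet_0)=1$, $\mathfrak{h}([\tau_1,\dots,\tau_\kappa]_0)=1+\max_j\mathfrak{h}(\tau_j)$; $\mathfrak{r}(\emptyset)=0$, $\mathfrak{r}(\bullet_0)=1$, $\mathfrak{r}([\tau_1]_0)=\mathfrak{r}(\tau_1)$,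 $\mathfrak{r}([\tau_1,\dots,\tau_\kappa]_0)=1+\max_j\mathfrak{r}(\tau_j)$ for $\kappa\ge2$; $\mathfrak{d}(\emptyset)=0$, $\mathfrak{d}(\bullet_0)=1$, $\mathfrak{d}([\tau_1,\dots,\tau_\kappa]_0)=M$ if exactly one $i$ has $\mathfrak{d}(\tau_i)=M:=\max_j\mathfrak{d}(\tau_j)$, and $M+1$ if at least two indices attain $M$. *)

theory Defs
  imports Main
begin

text \<open>Nonempty rooted trees with a single vertex colour 0 (m = 0).
  Node ts is the tree [t_1,...,t_k]_0; the children are stored as a list,
  but every quantity below is invariant under permutation of the list,
  so this faithfully represents unordered trees.  The set T is
  rtree option, with None the empty tree.  An element u = [t_1,...,t_k]_f
  of U_f is represented by the list of its (nonempty) subtrees.\<close>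

datatype rtree = Node "rtree list"

definition maxl :: "nat list \<Rightarrow> nat" where
  "maxl xs = foldr max xs 0"

fun rho :: "rtree \<Rightarrow> nat" where
  "rho (Node ts) = 1 + sum_list (map rho ts)"

fun hgt :: "rtree \<Rightarrow> nat" where
  "hgt (Node ts) = 1 + maxl (map hgt ts)"

fun rfun :: "rtree \<Rightarrow> nat" where
  "rfun (Node []) = 1"
| "rfun (Node [t]) = rfun t"
| "rfun (Node (t1 # t2 # ts)) = 1 + maxl (map rfun (t1 # t2 # ts))"

fun dfun :: "rtree \<Rightarrow> nat" where
  "dfun (Node []) = 1"
| "dfun (Node (t # ts)) =
     (let ds = map dfun (t # ts); M = maxl ds in
      if length (filter (\<lambda>x. x = M) ds) \<ge> 2 then M + 1 else M)"

fun rhoT :: "rtree option \<Rightarrow> nat" where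
  "rhoT None = 0" | "rhoT (Some t) = rho t"
fun hT :: "rtree option \<Rightarrow> nat" where
  "hT None = 0" | "hT (Some t) = hgt t"
fun rT :: "rtree option \<Rightarrow> nat" where
  "rT None = 0" | "rT (Some t) = rfun t"
fun dT :: "rtree option \<Rightarrow> nat" where
  "dT None = 0" | "dT (Some t) = dfun t"

definition rhoU :: "rtree list \<Rightarrow> nat" where
  "rhoU us = sum_list (map rho us)"
definition hU :: "rtree list \<Rightarrow> nat" where
  "hU us = maxl (map hgt us)"
definition rU :: "rtree list \<Rightarrow> nat" where
  "rU us = maxl (map rfun us)"
definition dU :: "rtree list \<Rightarrow> nat" where
  "dU us = maxl (map dfun us)"

end

theory Submission
  imports Defs
begin

lemma maxl_Cons[simp]: "maxl (x#xs) = max x (maxl xs)"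
  by (simp add: maxl_def)
lemma maxl_Nil[simp]: "maxl [] = 0" by (simp add: maxl_def)
lemma maxl_ge: "x \<in> set xs \<Longrightarrow> x \<le> maxl xs"
  by (induction xs) auto
lemma maxl_arg: "xs \<noteq> [] \<Longrightarrow> \<exists>x\<in>set xs. f x = maxl (map f xs)"
proof (induction xs)
  case Nil then show ?case by simp
next
  case (Cons a xs) then show ?case by (cases "xs = []") (auto simp: max_def)
qed
lemma maxl_attained: "maxl (map f xs) = k \<Longrightarrow> k \<ge> 1 \<Longrightarrow> \<exists>x\<in>set xs. f x = k"
  using maxl_arg[of xs f] by (cases xs) auto

lemma sum_ge_elem: "x \<in> set xs \<Longrightarrow> (f x::nat) \<le> sum_list (map f xs)"
  by (simp add: member_le_sum_list)

lemma sum_filter_le: "sum_list (map (f::_\<Rightarrow>nat) (filter P xs)) \<le> sum_list (map f xs)"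
  by (induction xs) auto

lemma rho_pos: "rho t \<ge> 1" by (cases t) auto

lemma rho_hgt: "hgt t \<le> rho t"
proof (induction t)
  case (Node ts)
  show ?case
  proof (cases ts)
    case Nil then show ?thesis by simp
  next
    case (Cons a l)
    then obtain x where x: "x \<in> set ts" "hgt x = maxl (map hgt ts)"
      using maxl_arg[of ts hgt] Cons by auto
    have "hgt x \<le> rho x" using Node.IH[OF x(1)] .
    also have "\<dots> \<le> sum_list (map rho ts)" using x sum_ge_elem by metis
    finally show ?thesis using x by simp
  qed
qed

lemma two_elems: "x \<in> set xs \<Longrightarrow> length xs \<ge> 2 \<Longrightarrow>
   \<exists>y \<in> set xs. rho x + rho y \<le> sum_list (map rho xs)"
proof -
  assume x: "x \<in> set xs" and l: "length xs \<ge> 2"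
  have e: "sum_list (map rho xs) = rho x + sum_list (map rho (remove1 x xs))"
    using x by (simp add: sum_list_map_remove1)
  have "length (remove1 x xs) \<ge> 1" using x l by (simp add: length_remove1)
  then obtain y where y: "y \<in> set (remove1 x xs)" by (cases "remove1 x xs") auto
  hence "y \<in> set xs" by (meson notin_set_remove1)
  moreover have "rho y \<le> sum_list (map rho (remove1 x xs))" using y sum_ge_elem by metis
  ultimately show ?thesis using e by force
qed

lemma rho_rfun: "2 * rfun t - 1 \<le> rho t"
proof (induction t rule: rfun.induct)
  case 1 then show ?case by simp
next
  case (2 t) then show ?case by simp
next
  case (3 t1 t2 ts)
  let ?l = "t1 # t2 # ts"
  obtain x where x: "x \<in> set ?l" "rfun x = maxl (map rfun ?l)"
    using maxl_arg[of ?l rfun] by auto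
  have "length ?l \<ge> 2" by simp
  then obtain y where y: "y \<in> set ?l" "rho x + rho y \<le> sum_list (map rho ?l)"
    using two_elems[OF x(1)] by blast
  have "2 * rfun x - 1 \<le> rho x" using 3 x(1) by blast
  moreover have "rho y \<ge> 1" by (rule rho_pos)
  ultimately have "2 * rfun x + 1 \<le> 1 + sum_list (map rho ?l)" using y by linarith
  then show ?case using x(2) by simp
qed

lemma two_filter: "length (filter P xs) \<ge> 2 \<Longrightarrow>
   \<exists>a b. a \<in> set xs \<and> b \<in> set xs \<and> P a \<and> P b \<and> rho a + rho b \<le> sum_list (map rho xs)"
proof -
  assume "length (filter P xs) \<ge> 2"
  then obtain a b r where ab: "filter P xs = a # b # r"
    by (cases "filter P xs"; cases "tl (filter P xs)") auto
  have "P a" "P b" "a \<in> set xs" "b \<in> set xs" using ab by (metis filter_set list.set_intros set_filter mem_Collect_eq)+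
  moreover have "rho a + rho b \<le> sum_list (map rho (filter P xs))" using ab by simp
  ultimately show ?thesis using sum_filter_le[of rho P xs] by fastforce
qed

lemma rho_dfun: "2 ^ dfun t - 1 \<le> rho t"
proof (induction t rule: dfun.induct)
  case 1 then show ?case by simp
next
  case (2 t ts)
  let ?l = "t # ts"
  define M where "M = maxl (map dfun ?l)"
  obtain x where x: "x \<in> set ?l" "dfun x = M"
    using maxl_arg[of ?l dfun] M_def by auto
  have IH: "\<And>s. s \<in> set ?l \<Longrightarrow> 2 ^ dfun s - 1 \<le> rho s" using 2 by auto
  have fl: "filter (\<lambda>x. x = M) (map dfun ?l) = map dfun (filter (\<lambda>s. dfun s = M) ?l)"
    by (simp add: filter_map comp_def)
  show ?case
  proof (cases "length (filter (\<lambda>x. x = M) (map dfun ?l)) \<ge> 2")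
    case True
    hence "length (filter (\<lambda>s. dfun s = M) ?l) \<ge> 2" using fl by simp
    then obtain a b where ab0: "a \<in> set ?l" "b \<in> set ?l" and ab: "dfun a = M" "dfun b = M"
       "rho a + rho b \<le> sum_list (map rho ?l)"
      using two_filter by blast
    have "2 ^ M - 1 \<le> rho a" "2 ^ M - 1 \<le> rho b" using IH[OF ab0(1)] IH[OF ab0(2)] ab by auto
    moreover have "(2::nat) ^ M \<ge> 1" by simp
    ultimately have "2 ^ (M+1) - 1 \<le> 1 + sum_list (map rho ?l)" using ab(3) by simp
    then show ?thesis using True by (simp add: M_def Let_def del: rho.simps) (simp add: M_def)
  next
    case False
    have "2 ^ M - 1 \<le> rho x" using IH x by auto
    also have "\<dots> \<le> sum_list (map rho ?l)" using x sum_ge_elem by metis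
    finally have "2 ^ M - 1 \<le> sum_list (map rho ?l)" .
    then show ?thesis using False by (simp add: M_def Let_def del: rho.simps) (simp add: M_def)
  qed
qed

theorem mainTheorem11:
  fixes k :: nat and \<tau> :: "rtree option" and u :: "rtree list"
  assumes "k \<ge> 1"
  shows "(hT \<tau> = k \<longrightarrow> rhoT \<tau> \<ge> k) \<and>
         (rT \<tau> = k \<longrightarrow> rhoT \<tau> \<ge> 2 * k - 1) \<and>
         (dT \<tau> = k \<longrightarrow> rhoT \<tau> \<ge> 2 ^ k - 1) \<and>
         (hU u = k \<longrightarrow> rhoU u \<ge> k) \<and>
         (rU u = k \<longrightarrow> rhoU u \<ge> 2 * k - 1) \<and>
         (dU u = k \<longrightarrow> rhoU u \<ge> 2 ^ k - 1)"
proof -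
  have T: "(hT \<tau> = k \<longrightarrow> rhoT \<tau> \<ge> k) \<and>
         (rT \<tau> = k \<longrightarrow> rhoT \<tau> \<ge> 2 * k - 1) \<and>
         (dT \<tau> = k \<longrightarrow> rhoT \<tau> \<ge> 2 ^ k - 1)"
    using rho_hgt rho_rfun rho_dfun by (cases \<tau>) auto
  have U: "\<And>f g. (\<And>t. g (f t) \<le> rho t) \<Longrightarrow> maxl (map f u) = k \<Longrightarrow> g k \<le> rhoU u"
  proof -
    fix f g assume h: "\<And>t. g (f t) \<le> rho t" and m: "maxl (map f u) = k"
    obtain x where x: "x \<in> set u" "f x = k" using maxl_attained[OF m assms] by auto
    have "g k \<le> rho x" using h x by metis
    also have "\<dots> \<le> rhoU u" unfolding rhoU_def using x sum_ge_elem by metis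
    finally show "g k \<le> rhoU u" .
  qed
  show ?thesis using T U[where f=hgt and g="\<lambda>x. x"] U[where f=rfun and g="\<lambda>x. 2*x-1"] U[where f=dfun and g="\<lambda>x. 2^x-1"]
      rho_hgt rho_rfun rho_dfun unfolding hU_def rU_def dU_def by blast
qed

end
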